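(* Let $G=(V,E)$ be a social network with seller $s$ and buyers $N$, and let the fair diffusion mechanism (FDM) be as defined in the context. For every feasible action profile $a$, the seller's revenue under FDM, $\sum_{i\in N}p_i(a)$, is at least the seller's revenue under IDM, namely $v^{1^{st}}_{N_{-c_1}}$ (where $c_1$ is the first element of the strong critical ancestor sequence of the highest bidder $h$), and this in turn is at least the seller's revenue $v^{2^{nd}}_{r_s}$ of the Vickrey (second-price) auction held only among the seller's neighbours $r_s$, where $v^{2^{nd}}_{r_s}$ denotes the second-highest reported valuation among $r_s$.
   Context: Model. A seller $s$ sells one item on an undirected graph $G=(V,E)$ with $V=N\cup\{s\}$, $N=\{1,\dots,n\}$ the buyers. Each buyer $i$ has neighbour set $r_i\subseteq V$ and private valuation $v_i\ge 0$; her type is $\theta_i=(v_i,r_i)$; the seller's valuation is $0$ and $r_s$ denotes the seller's neighbours. Each buyer reports an action $a_i=(v_i',r_i')$ with $v_i'\ge0$ the reported valuation and $r_i'\subseteq r_i$ the neighbours she invites, or $a_i=nil$ if she does not participate. A profile $a$ is feasible if every $i$ with $a_i\neq nil$ is reachable by a path $s,k_1,\dots,k_m,i$ with $k_1\in r_s$, $k_{t+1}\in r'_{k_t}$ and $i\in r'_{k_m}$. All graph notions below refer to this reported network (participating buyers, with $j$ reachable from $i$ when $j\in r_i'$, and from $s$ when $j\in r_s$); $d_i$ is the length of the shortest such path from $s$ to $i$. A mechanism gives an allocation $\pi_i(a)\in\{0,1\}$ (at most one winner) and payments $p_i(a)\in\mathbb{R}$ (negative means $i$ receives money); the seller's revenue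 is $\sum_{i\in N}p_i(a)$. Definitions. A set $D\subseteq N$ is a cut set of buyer $i$ if no path from $s$ to $i$ exists without $D$; it is a minimal cut set if no proper subset is a cut set. $j$ is a critical ancestor of $i$ if $j$ belongs to a minimal cut set of $i$; a strong critical ancestor if $\{j\}$ is a minimal cut set of $i$; a weak critical ancestor if critical but not strong. $V_i=\{j\in N: i$ is a strong critical ancestor of $j\}$ (so $i\in V_i$); for $K\subseteq N$, $N_{-K}=N\setminus\bigcup_{i\in K}V_i$, and $N_{-i}=N_{-\{i\}}$. For $D\subseteq N$, $v_D^{1^{st}}=\max_{i\in D}v_i'$, and $g_D^{1^{st}}\in\arg\max_{i\in D}v^{1^{st}}_{V_i}$ (random tie-breaking). The strong critical ancestor sequence of $i$ is $C_i=(c_1^i,\dots,c_k^i)$, the strong critical ancestors of $i$ ordered by strictly increasing depth, with $c_k^i=i$. FDM. Let $h\in\arg\max_{i\in N}v_i'$ (random tie-breaking) and $C=(c_1,\dots,c_h)$ its strong critical ancestor sequence. For consecutive $c_j,c_{j+1}$, let $M_{c_jc_{j+1}}$ be the set of weak critical ancestors of $h$ lying on some simple path from $c_j$ to $c_{j+1}$ (for the last element the corresponding set $\{c_{j+1}\}\cup M_{c_jc_{j+1}}$ is empty). Allocation: the item goes to the first $c_j\in C$ (smallest $j$) with $v'_{c_j}=v^{1^{st}}_{N_{-(\{c_{j+1}\}\cup M_{c_jc_{j+1}})}}$; call it $c_w$, and let $\hat C=(c_1,\dots,c_w)$. Rewards: for $c_j\in\hat C$ (with $j\ge 2$), $R_{c_j}=\big(v^{1^{st}}_{N_{-(\{c_j\}\cup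 \{g^{1^{st}}_{M_{c_{j-1}c_j}}\})}}-v^{1^{st}}_{N_{-(\{c_j\}\cup M_{c_{j-1}c_j})}}\big)/(|M_{c_{j-1}c_j}|+1)$; for $i\in M_{c_{j-1}c_j}$, $R_i=\big(v^{1^{st}}_{N_{-(\{i\}\cup\{c_j\})}}-v^{1^{st}}_{N_{-(\{c_j\}\cup M_{c_{j-1}c_j})}}\big)/(|M_{c_{j-1}c_j}|+1)$; otherwise $R_i=0$. Payments: $p_{c_j}=v^{1^{st}}_{N_{-c_j}}-v^{1^{st}}_{N_{-(\{c_{j+1}\}\cup M_{c_jc_{j+1}})}}-R_{c_j}$ for $c_j\in\hat C$, $j<w$; $p_{c_w}=v^{1^{st}}_{N_{-c_w}}-R_{c_w}$; $p_i=-R_i$ for $i\in M_{c_{j-1}c_j}$, $2\le j\le w$; $p_i=0$ otherwise. IDM (the information diffusion mechanism of Li et al.) yields seller revenue $v^{1^{st}}_{N_{-c_1}}$ on the same profile. *)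

theory Defs
  imports Complex_Main
begin

text \<open>An action profile is act :: 'a => (real * 'a set) option, where None = nil (no
  participation) and Some (v', r') = (reported valuation, invited neighbours).\<close>

definition valid_network :: "'a \<Rightarrow> 'a set \<Rightarrow> 'a set \<Rightarrow> ('a \<Rightarrow> 'a set) \<Rightarrow> bool" where
  "valid_network s N rs r \<longleftrightarrow> finite N \<and> s \<notin> N \<and> rs \<subseteq> N \<and>
     (\<forall>i\<in>N. r i \<subseteq> insert s N - {i}) \<and>
     (\<forall>i\<in>N. \<forall>j\<in>N. j \<in> r i \<longleftrightarrow> i \<in> r j) \<and>
     (\<forall>i\<in>N. i \<in> rs \<longleftrightarrow> s \<in> r i)"

definition part :: "'a set \<Rightarrow> ('a \<Rightarrow> (real \<times> 'a set) option) \<Rightarrow> 'a set" where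
  "part N act = {i \<in> N. act i \<noteq> None}"

definition rval :: "('a \<Rightarrow> (real \<times> 'a set) option) \<Rightarrow> 'a \<Rightarrow> real" where
  "rval act i = fst (the (act i))"

definition rinv :: "('a \<Rightarrow> (real \<times> 'a set) option) \<Rightarrow> 'a \<Rightarrow> 'a set" where
  "rinv act i = snd (the (act i))"

definition redge :: "'a \<Rightarrow> 'a set \<Rightarrow> 'a set \<Rightarrow> ('a \<Rightarrow> (real \<times> 'a set) option) \<Rightarrow> 'a \<Rightarrow> 'a \<Rightarrow> bool" where
  "redge s rs N act x y \<longleftrightarrow> y \<in> part N act \<and>
     ((x = s \<and> y \<in> rs) \<or> (x \<in> part N act \<and> y \<in> rinv act x))"

definition redges :: "'a \<Rightarrow> 'a set \<Rightarrow> 'a set \<Rightarrow> ('a \<Rightarrow> (real \<times> 'a set) option) \<Rightarrow> ('a \<times> 'a) set" where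
  "redges s rs N act = {(x, y). redge s rs N act x y}"

definition feasible :: "'a \<Rightarrow> 'a set \<Rightarrow> 'a set \<Rightarrow> ('a \<Rightarrow> 'a set) \<Rightarrow> ('a \<Rightarrow> (real \<times> 'a set) option) \<Rightarrow> bool" where
  "feasible s N rs r act \<longleftrightarrow>
     (\<forall>i\<in>part N act. rval act i \<ge> 0 \<and> rinv act i \<subseteq> r i \<and> (s, i) \<in> (redges s rs N act)\<^sup>+)"

definition reach_avoid :: "'a \<Rightarrow> 'a set \<Rightarrow> 'a set \<Rightarrow> ('a \<Rightarrow> (real \<times> 'a set) option) \<Rightarrow> 'a set \<Rightarrow> 'a \<Rightarrow> bool" where
  "reach_avoid s rs N act D i \<longleftrightarrow> (s, i) \<in> {(x, y). redge s rs N act x y \<and> y \<notin> D}\<^sup>+"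

definition cut_set where
  "cut_set s rs N act D i \<longleftrightarrow> D \<subseteq> part N act \<and> \<not> reach_avoid s rs N act D i"

definition min_cut_set where
  "min_cut_set s rs N act D i \<longleftrightarrow> cut_set s rs N act D i \<and> (\<forall>D'. D' \<subset> D \<longrightarrow> \<not> cut_set s rs N act D' i)"

definition critical_anc where
  "critical_anc s rs N act j i \<longleftrightarrow> (\<exists>D. min_cut_set s rs N act D i \<and> j \<in> D)"

definition strong_anc where
  "strong_anc s rs N act j i \<longleftrightarrow> min_cut_set s rs N act {j} i"

definition weak_anc where
  "weak_anc s rs N act j i \<longleftrightarrow> critical_anc s rs N act j i \<and> \<not> strong_anc s rs N act j i"

definition Vset where
  "Vset s rs N act i = {j \<in> part N act. strong_anc s rs N act i j}"

definition Nminus where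
  "Nminus s rs N act K = part N act - (\<Union>i\<in>K. Vset s rs N act i)"

definition v1st :: "('a \<Rightarrow> (real \<times> 'a set) option) \<Rightarrow> 'a set \<Rightarrow> real" where
  "v1st act D = Max (insert 0 (rval act ` D))"

text \<open>Second highest reported valuation in D: remove a top bidder and take the highest
  of the rest (0 if there are fewer than two bidders).\<close>
definition v2nd :: "('a \<Rightarrow> (real \<times> 'a set) option) \<Rightarrow> 'a set \<Rightarrow> real" where
  "v2nd act D = (if D = {} then 0 else Min ((\<lambda>k. v1st act (D - {k})) ` D))"

definition depth where
  "depth s rs N act i = (LEAST k. (s, i) \<in> (redges s rs N act) ^^ k)"

definition sca_seq where
  "sca_seq s rs N act i = (THE C. sorted_wrt (\<lambda>x y. depth s rs N act x < depth s rs N act y) C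
        \<and> set C = {j. strong_anc s rs N act j i})"

definition simple_path where
  "simple_path s rs N act x y xs \<longleftrightarrow> xs \<noteq> [] \<and> hd xs = x \<and> last xs = y \<and> distinct xs \<and>
     (\<forall>k. Suc k < length xs \<longrightarrow> redge s rs N act (xs ! k) (xs ! Suc k))"

definition Mset where
  "Mset s rs N act h x y = {m. weak_anc s rs N act m h \<and>
      (\<exists>xs. simple_path s rs N act x y xs \<and> m \<in> set xs)}"

text \<open>FDM, given the highest bidder h and the tie-breaking rule g for g^{1st}.
  Indices into the list C = sca_seq h are 0-based: C!j is c_{j+1} of the paper.\<close>
definition fdm_M where
  "fdm_M s rs N act h j = (let C = sca_seq s rs N act h in Mset s rs N act h (C ! j) (C ! Suc j))"

definition fdm_K where
  "fdm_K s rs N act h j = (let C = sca_seq s rs N act h in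
     if Suc j < length C then insert (C ! Suc j) (fdm_M s rs N act h j) else {})"

definition fdm_w where
  "fdm_w s rs N act h = (let C = sca_seq s rs N act h in
     LEAST j. j < length C \<and> rval act (C ! j) = v1st act (Nminus s rs N act (fdm_K s rs N act h j)))"

definition gset :: "('a set \<Rightarrow> 'a) \<Rightarrow> 'a set \<Rightarrow> 'a set" where
  "gset g D = (if D = {} then {} else {g D})"

text \<open>Reward of c_{j+1} (0-based index j), nonzero only for 1 <= j <= w.\<close>
definition fdm_Rc where
  "fdm_Rc s rs N act h g j = (let C = sca_seq s rs N act h; w = fdm_w s rs N act h;
      M = fdm_M s rs N act h (j - 1) in
     if 1 \<le> j \<and> j \<le> w then
       (v1st act (Nminus s rs N act (insert (C ! j) (gset g M)))
        - v1st act (Nminus s rs N act (insert (C ! j) M))) / (real (card M) + 1)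
     else 0)"

text \<open>Reward of i in M_{c_j c_{j+1}} (0-based: M between C!(j-1) and C!j).\<close>
definition fdm_RM where
  "fdm_RM s rs N act h j i = (let C = sca_seq s rs N act h; M = fdm_M s rs N act h (j - 1) in
       (v1st act (Nminus s rs N act {i, C ! j})
        - v1st act (Nminus s rs N act (insert (C ! j) M))) / (real (card M) + 1))"

definition fdm_pay where
  "fdm_pay s rs N act h g i = (let C = sca_seq s rs N act h; w = fdm_w s rs N act h in
     if \<exists>j. j \<le> w \<and> j < length C \<and> C ! j = i then
       (let j = (LEAST j. j < length C \<and> C ! j = i) in
         if j < w then v1st act (Nminus s rs N act {C ! j})
                       - v1st act (Nminus s rs N act (fdm_K s rs N act h j)) - fdm_Rc s rs N act h g j
         else v1st act (Nminus s rs N act {C ! j}) - fdm_Rc s rs N act h g j)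
     else if \<exists>j. 1 \<le> j \<and> j \<le> w \<and> i \<in> fdm_M s rs N act h (j - 1) then
       (let j = (LEAST j. 1 \<le> j \<and> j \<le> w \<and> i \<in> fdm_M s rs N act h (j - 1)) in
         - fdm_RM s rs N act h j i)
     else 0)"

definition fdm_revenue where
  "fdm_revenue s rs N act h g = (\<Sum>i\<in>part N act. fdm_pay s rs N act h g i)"

end

theory Submission
  imports Defs
begin

lemma redges_iff: "(x,y) \<in> redges s rs N act \<longleftrightarrow> redge s rs N act x y"
  by (simp add: redges_def)

lemma v1st_mono: "finite B \<Longrightarrow> A \<subseteq> B \<Longrightarrow> v1st act A \<le> v1st act B"
  unfolding v1st_def by (rule Max_mono) auto

lemma v1st_ge0: "finite D \<Longrightarrow> 0 \<le> v1st act D"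
  unfolding v1st_def by (rule Max_ge) auto

lemma Nminus_sub: "Nminus s rs N act K \<subseteq> part N act"
  unfolding Nminus_def by auto

lemma Nminus_anti: "K \<subseteq> K' \<Longrightarrow> Nminus s rs N act K' \<subseteq> Nminus s rs N act K"
  unfolding Nminus_def by auto

lemma depth_path:
  assumes "(s,i) \<in> (redges s rs N act)\<^sup>+"
  shows "(s,i) \<in> (redges s rs N act) ^^ depth s rs N act i"
    "\<And>k. (s,i) \<in> (redges s rs N act)^^k \<Longrightarrow> depth s rs N act i \<le> k"
proof -
  from assms obtain n where "(s,i) \<in> (redges s rs N act)^^n" using trancl_power by blast
  then show "(s,i) \<in> (redges s rs N act) ^^ depth s rs N act i" unfolding depth_def by (rule LeastI)
  show "\<And>k. (s,i) \<in> (redges s rs N act)^^k \<Longrightarrow> depth s rs N act i \<le> k"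
    unfolding depth_def by (rule Least_le)
qed

lemma strong_dom:
  assumes sa: "strong_anc s rs N act j i"
    and f: "f 0 = s" "f n = i" "\<forall>m<n. (f m, f (Suc m)) \<in> redges s rs N act" and si: "s \<noteq> i"
  shows "\<exists>p\<le>n. f p = j"
proof (rule ccontr)
  assume "\<not> ?thesis"
  hence nj: "\<forall>p\<le>n. f p \<noteq> j" by auto
  let ?Q = "{(x, y). redge s rs N act x y \<and> y \<notin> {j}}"
  have "\<forall>m<n. (f m, f (Suc m)) \<in> ?Q" using f nj by (auto simp: redges_iff)
  hence "(s,i) \<in> ?Q ^^ n"
    unfolding relpow_fun_conv using f by blast
  moreover have "n > 0" using f si by (cases n) auto
  ultimately have "(s,i) \<in> ?Q\<^sup>+" using trancl_power by blast
  hence "reach_avoid s rs N act {j} i" unfolding reach_avoid_def .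
  with sa show False unfolding strong_anc_def min_cut_set_def cut_set_def by auto
qed

lemma depth_pos:
  assumes tr: "\<And>x. x \<in> part N act \<Longrightarrow> (s,x) \<in> (redges s rs N act)\<^sup>+"
   and i: "i \<in> part N act" and j: "j \<in> part N act"
   and f: "f 0 = s" "f d = i" "\<forall>m<d. (f m, f (Suc m)) \<in> redges s rs N act"
   and d: "d = depth s rs N act i"
   and p: "p \<le> d" "f p = j"
  shows "depth s rs N act j = p"
proof -
  let ?R = "redges s rs N act"
  have "\<forall>m<p. (f m, f (Suc m)) \<in> ?R" using f p by auto
  hence "(s,j) \<in> ?R^^p" unfolding relpow_fun_conv using f p by blast
  hence le: "depth s rs N act j \<le> p" using depth_path(2)[OF tr[OF j]] by blast
  have sj: "(s,j) \<in> ?R ^^ depth s rs N act j" using depth_path(1)[OF tr[OF j]] .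
  have "(j,i) \<in> ?R^^(d-p)" unfolding relpow_fun_conv
    apply (rule exI[of _ "\<lambda>m. f (p+m)"]) using f p by auto
  with sj have "(s,i) \<in> ?R^^(depth s rs N act j + (d-p))" by (auto simp: relpow_add)
  hence "d \<le> depth s rs N act j + (d-p)" using depth_path(2)[OF tr[OF i]] d by blast
  with le p show ?thesis by linarith
qed

lemma sorted_key_unique:
  fixes f :: "'a \<Rightarrow> nat"
  assumes fin: "finite S" and inj: "inj_on f S"
  shows "\<exists>!C. sorted_wrt (\<lambda>x y. f x < f y) C \<and> set C = S"
proof -
  obtain xs where xs: "set xs = S" "distinct xs" using finite_distinct_list[OF fin] by blast
  let ?C = "sort_key f xs"
  have s1: "sorted (map f ?C)" by simp
  have s2: "set ?C = S" using xs by simp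
  have "distinct ?C" using xs by simp
  hence "distinct (map f ?C)" using s2 inj by (simp add: distinct_map)
  hence "sorted_wrt (<) (map f ?C)" using s1 strict_sorted_iff by blast
  hence ex: "sorted_wrt (\<lambda>x y. f x < f y) ?C" by (simp add: sorted_wrt_map)
  show ?thesis
  proof (rule ex1I[of _ ?C])
    show "sorted_wrt (\<lambda>x y. f x < f y) ?C \<and> set ?C = S" using ex s2 by blast
    fix D assume D: "sorted_wrt (\<lambda>x y. f x < f y) D \<and> set D = S"
    have "sorted_wrt (<) (map f D)" using D by (simp add: sorted_wrt_map)
    moreover have "sorted_wrt (<) (map f ?C)" using ex by (simp add: sorted_wrt_map)
    moreover have "set (map f ?C) = set (map f D)" using D s2 by simp
    ultimately have "map f D = map f ?C" using strict_sorted_equal by blast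
    moreover have "inj_on f (set D \<union> set ?C)" using D s2 inj by simp
    ultimately show "D = ?C" using inj_on_map_eq_map by blast
  qed
qed

lemma sca_props:
  assumes net: "valid_network s N rs r" and feas: "feasible s N rs r act"
    and h: "h \<in> part N act"
  shows "sca_seq s rs N act h \<noteq> [] \<and> distinct (sca_seq s rs N act h)
    \<and> last (sca_seq s rs N act h) = h
    \<and> set (sca_seq s rs N act h) = {j. strong_anc s rs N act j h}"
proof -
  let ?R = "redges s rs N act"
  let ?S = "{j. strong_anc s rs N act j h}"
  let ?dp = "depth s rs N act"
  have tr: "\<And>x. x \<in> part N act \<Longrightarrow> (s,x) \<in> ?R\<^sup>+" using feas unfolding feasible_def by blast
  have finP: "finite (part N act)" using net unfolding valid_network_def part_def by auto
  have SP: "?S \<subseteq> part N act"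
    unfolding strong_anc_def min_cut_set_def cut_set_def by auto
  have finS: "finite ?S" using finP SP finite_subset by blast
  have sh: "s \<noteq> h" using net h unfolding valid_network_def part_def by auto
  have hS: "h \<in> ?S"
  proof -
    have "\<not> reach_avoid s rs N act {h} h"
    proof
      assume "reach_avoid s rs N act {h} h"
      then show False unfolding reach_avoid_def by (cases rule: tranclE) auto
    qed
    moreover have "reach_avoid s rs N act {} h"
    proof -
      have "{(x, y). redge s rs N act x y \<and> y \<notin> {}} = ?R" by (auto simp: redges_iff)
      then show ?thesis unfolding reach_avoid_def using tr[OF h] by simp
    qed
    ultimately show ?thesis using h
      unfolding strong_anc_def min_cut_set_def cut_set_def
      by (auto simp: subset_singleton_iff)
  qed
  obtain f where f: "f 0 = s" "f (?dp h) = h" "\<forall>m<?dp h. (f m, f (Suc m)) \<in> ?R"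
    using depth_path(1)[OF tr[OF h]] unfolding relpow_fun_conv by blast
  have pos: "\<exists>p\<le>?dp h. f p = j \<and> ?dp j = p" if "j \<in> ?S" for j
  proof -
    have sa: "strong_anc s rs N act j h" using that by simp
    obtain p where p: "p \<le> ?dp h" "f p = j" using strong_dom[OF sa f sh] by blast
    have "?dp j = p" using depth_pos[OF tr h _ f refl p] that SP by blast
    then show ?thesis using p by blast
  qed
  have fj: "f (?dp j) = j \<and> ?dp j \<le> ?dp h" if "j \<in> ?S" for j
    using pos[OF that] by auto
  have inj: "inj_on ?dp ?S"
  proof
    fix x y assume xy: "x \<in> ?S" "y \<in> ?S" "?dp x = ?dp y"
    have "x = f (?dp x)" using fj[OF xy(1)] by simp
    also have "\<dots> = f (?dp y)" using xy(3) by simp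
    also have "\<dots> = y" using fj[OF xy(2)] by simp
    finally show "x = y" .
  qed
  have maxd: "?dp j < ?dp h" if "j \<in> ?S" "j \<noteq> h" for j
  proof -
    have "?dp j \<le> ?dp h" "f (?dp j) = j" using fj[OF that(1)] by auto
    moreover have "?dp j \<noteq> ?dp h" using f(2) that(2) \<open>f (?dp j) = j\<close> by metis
    ultimately show ?thesis by simp
  qed
  have C: "sorted_wrt (\<lambda>x y. ?dp x < ?dp y) (sca_seq s rs N act h) \<and> set (sca_seq s rs N act h) = ?S"
    unfolding sca_seq_def by (rule theI'[OF sorted_key_unique[OF finS inj]])
  let ?C = "sca_seq s rs N act h"
  have ne: "?C \<noteq> []" using C hS by auto
  have "sorted_wrt (<) (map ?dp ?C)" using C by (simp add: sorted_wrt_map)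
  hence "distinct (map ?dp ?C)" using strict_sorted_iff by blast
  hence dist: "distinct ?C" by (simp add: distinct_map)
  have last: "last ?C = h"
  proof (rule ccontr)
    assume nl: "last ?C \<noteq> h"
    obtain k where k: "k < length ?C" "?C ! k = h" using C hS by (metis in_set_conv_nth)
    have lastn: "last ?C = ?C ! (length ?C - 1)" using ne by (simp add: last_conv_nth)
    have "k \<noteq> length ?C - 1" using nl k lastn by auto
    hence "k < length ?C - 1" using k by auto
    hence "?dp h < ?dp (last ?C)" using sorted_wrt_nth_less[of _ ?C k "length ?C - 1"] C k lastn ne
      by auto
    moreover have "last ?C \<in> ?S" using C ne last_in_set by blast
    ultimately show False using maxd nl by fastforce
  qed
  show ?thesis using ne dist last C by blast
qed

lemma frac_sum:
  fixes n z :: real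
  assumes "n + 1 > 0"
  shows "z / (n + 1) + n * (z / (n + 1)) = z"
proof -
  have "(n + 1) * (z / (n + 1)) = n * (z / (n + 1)) + 1 * (z / (n + 1))" by (rule distrib_right)
  hence "z / (n + 1) + n * (z / (n + 1)) = (n + 1) * (z / (n + 1))" by simp
  also have "\<dots> = z" using assms by simp
  finally show ?thesis .
qed

lemma telescope:
  fixes A B R G :: "nat \<Rightarrow> real"
  assumes "R 0 = 0" "\<forall>j. 1 \<le> j \<and> j \<le> w \<longrightarrow> R j + G j \<le> A j - B (j - 1)"
  shows "A 0 \<le> (\<Sum>j\<le>w. A j - R j) - (\<Sum>j<w. B j) - (\<Sum>j\<in>{1..w}. G j)"
  using assms(2)
proof (induction w)
  case 0
  then show ?case using assms(1) by simp
next
  case (Suc w)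
  have "R (Suc w) + G (Suc w) \<le> A (Suc w) - B w" using Suc.prems by force
  moreover have "A 0 \<le> (\<Sum>j\<le>w. A j - R j) - (\<Sum>j<w. B j) - (\<Sum>j\<in>{1..w}. G j)"
    using Suc by auto
  ultimately show ?case by (simp add: sum.cl_ivl_Suc)
qed


theorem theorem3:
  fixes s :: 'a and N rs :: "'a set" and r :: "'a \<Rightarrow> 'a set"
    and act :: "'a \<Rightarrow> (real \<times> 'a set) option"
    and h :: 'a and g :: "'a set \<Rightarrow> 'a"
  assumes net: "valid_network s N rs r"
    and feas: "feasible s N rs r act"
    and h_max: "h \<in> part N act" "\<forall>j\<in>part N act. rval act j \<le> rval act h"
    and g_tie: "\<forall>D. D \<subseteq> part N act \<and> D \<noteq> {} \<longrightarrow> g D \<in> D \<and>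
        (\<forall>j\<in>D. v1st act (Vset s rs N act j) \<le> v1st act (Vset s rs N act (g D)))"
  shows "v2nd act (rs \<inter> part N act)
           \<le> v1st act (Nminus s rs N act {hd (sca_seq s rs N act h)})
         \<and> v1st act (Nminus s rs N act {hd (sca_seq s rs N act h)})
           \<le> fdm_revenue s rs N act h g"
proof -
  let ?P = "part N act"
  let ?C = "sca_seq s rs N act h"
  let ?Nm = "Nminus s rs N act"
  let ?V = "v1st act"
  have finP: "finite ?P" using net unfolding valid_network_def part_def by auto
  have finNm: "finite (?Nm K)" for K using finP Nminus_sub finite_subset by metis
  have part1: "v2nd act (rs \<inter> ?P) \<le> ?V (?Nm {hd ?C})"
  proof -
    let ?D = "rs \<inter> ?P"
    let ?c = "hd ?C"
    have sub: "?D - {?c} \<subseteq> ?Nm {?c}"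
    proof
      fix x assume x: "x \<in> ?D - {?c}"
      have "x \<notin> Vset s rs N act ?c"
      proof
        assume "x \<in> Vset s rs N act ?c"
        hence "\<not> reach_avoid s rs N act {?c} x"
          unfolding Vset_def strong_anc_def min_cut_set_def cut_set_def by auto
        moreover have "reach_avoid s rs N act {?c} x" unfolding reach_avoid_def
          using x by (auto simp: redge_def intro!: r_into_trancl)
        ultimately show False by blast
      qed
      thus "x \<in> ?Nm {?c}" using x unfolding Nminus_def by auto
    qed
    show ?thesis
    proof (cases "?D = {}")
      case True thus ?thesis using v1st_ge0[OF finNm] by (simp add: v2nd_def)
    next
      case False
      define k where "k = (if ?c \<in> ?D then ?c else (SOME k. k \<in> ?D))"
      have "\<exists>k. k \<in> ?D" using False by blast
      hence "(SOME k. k \<in> ?D) \<in> ?D" by (rule someI_ex)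
      hence kD: "k \<in> ?D" unfolding k_def by simp
      have sk: "?D - {k} \<subseteq> ?Nm {?c}" using sub unfolding k_def by auto
      have "v2nd act ?D \<le> ?V (?D - {k})" unfolding v2nd_def using False kD finP
        by (auto intro!: Min_le)
      also have "\<dots> \<le> ?V (?Nm {?c})" by (rule v1st_mono[OF finNm sk])
      finally show ?thesis .
    qed
  qed
  have props: "?C \<noteq> [] \<and> distinct ?C \<and> last ?C = h \<and> set ?C = {j. strong_anc s rs N act j h}"
    using sca_props[OF net feas h_max(1)] .
  hence ne: "?C \<noteq> []" and dist: "distinct ?C" and last: "last ?C = h"
    and setC: "set ?C = {j. strong_anc s rs N act j h}" by auto
  let ?L = "length ?C"
  let ?w = "fdm_w s rs N act h"
  let ?M = "fdm_M s rs N act h"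
  let ?K = "fdm_K s rs N act h"
  have setP: "set ?C \<subseteq> ?P" using setC
    unfolding strong_anc_def min_cut_set_def cut_set_def by auto
  have MP: "?M j \<subseteq> ?P" for j
    unfolding fdm_M_def Let_def Mset_def weak_anc_def critical_anc_def min_cut_set_def cut_set_def
    by auto
  have finM: "finite (?M j)" for j using MP finP finite_subset by metis
  have lastL: "?C ! (?L - 1) = h" using ne last by (simp add: last_conv_nth)
  have rh0: "0 \<le> rval act h" using feas h_max(1) unfolding feasible_def by auto
  have VP: "?V ?P = rval act h" unfolding v1st_def
    by (rule Max_eqI) (use finP h_max rh0 in auto)
  have KL: "?K (?L - 1) = {}" unfolding fdm_K_def Let_def using ne by simp
  have wdef: "?w = (LEAST j. j < ?L \<and> rval act (?C ! j) = ?V (?Nm (?K j)))"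
    by (simp add: fdm_w_def Let_def)
  have wit: "?L - 1 < ?L \<and> rval act (?C ! (?L - 1)) = ?V (?Nm (?K (?L - 1)))"
    using ne lastL KL VP by (simp add: Nminus_def)
  have wL: "?w < ?L" unfolding wdef using LeastI[where P="\<lambda>j. j < ?L \<and> rval act (?C ! j) = ?V (?Nm (?K j))", OF wit] by blast
  let ?pay = "fdm_pay s rs N act h g"
  have payC: "?pay (?C ! j) = ?V (?Nm {?C!j}) - (if j < ?w then ?V (?Nm (?K j)) else 0)
      - fdm_Rc s rs N act h g j" if "j \<le> ?w" for j
  proof -
    have jL: "j < ?L" using that wL by simp
    have ex: "\<exists>j'. j' \<le> ?w \<and> j' < ?L \<and> ?C ! j' = ?C ! j" using that jL by blast
    have le: "(LEAST j'. j' < ?L \<and> ?C ! j' = ?C ! j) = j"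
      by (rule Least_equality) (use jL dist nth_eq_iff_index_eq in auto)
    show ?thesis unfolding fdm_pay_def Let_def using ex le by simp
  qed
  define T where "T i = (\<Sum>j\<in>{1..?w}. if i \<in> ?M (j-1) then fdm_RM s rs N act h j i else 0)" for i
  have RMnn: "0 \<le> fdm_RM s rs N act h j i" if "i \<in> ?M (j-1)" for i j
  proof -
    have "{i, ?C ! j} \<subseteq> insert (?C ! j) (?M (j-1))" using that by auto
    hence "?V (?Nm (insert (?C ! j) (?M (j-1)))) \<le> ?V (?Nm {i, ?C ! j})"
      by (rule v1st_mono[OF finNm Nminus_anti])
    thus ?thesis unfolding fdm_RM_def Let_def by (simp add: divide_nonneg_pos)
  qed
  have Tnn: "0 \<le> T i" for i unfolding T_def by (rule sum_nonneg) (use RMnn in auto)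
  let ?SC = "(\<lambda>j. ?C ! j) ` {..?w}"
  have payO: "- T i \<le> ?pay i" if "i \<notin> ?SC" for i
  proof -
    have nA: "\<not>(\<exists>j. j \<le> ?w \<and> j < ?L \<and> ?C ! j = i)" using that by auto
    show ?thesis
    proof (cases "\<exists>j. 1 \<le> j \<and> j \<le> ?w \<and> i \<in> ?M (j-1)")
      case True
      let ?j = "LEAST j. 1 \<le> j \<and> j \<le> ?w \<and> i \<in> ?M (j-1)"
      have j: "1 \<le> ?j \<and> ?j \<le> ?w \<and> i \<in> ?M (?j - 1)" using True by (rule LeastI_ex)
      have pay: "?pay i = - fdm_RM s rs N act h ?j i"
        unfolding fdm_pay_def Let_def if_not_P[OF nA] if_P[OF True] by (rule refl)
      have "(if i \<in> ?M (?j-1) then fdm_RM s rs N act h ?j i else 0) \<le> T i" unfolding T_def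
        by (rule member_le_sum) (use j RMnn in auto)
      then show ?thesis using pay j by simp
    next
      case False
      have "?pay i = 0" unfolding fdm_pay_def Let_def if_not_P[OF nA] if_not_P[OF False] by (rule refl)
      then show ?thesis using Tnn[of i] by simp
    qed
  qed
  have grp: "fdm_Rc s rs N act h g j + (\<Sum>i\<in>?M (j-1). fdm_RM s rs N act h j i)
      \<le> ?V (?Nm {?C!j}) - ?V (?Nm (?K (j-1)))" if "1 \<le> j" "j \<le> ?w" for j
  proof -
    have jL: "j < ?L" using that wL by simp
    let ?MM = "?M (j-1)"
    let ?X = "?V (?Nm (insert (?C!j) ?MM))"
    let ?Y = "?V (?Nm {?C!j})"
    let ?c = "real (card ?MM) + 1"
    have K: "?K (j-1) = insert (?C!j) ?MM" using jL that unfolding fdm_K_def Let_def by simp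
    have c: "?c > 0" by simp
    have Rc: "fdm_Rc s rs N act h g j = (?V (?Nm (insert (?C!j) (gset g ?MM))) - ?X) / ?c"
      unfolding fdm_Rc_def Let_def using that by simp
    have "?V (?Nm (insert (?C!j) (gset g ?MM))) \<le> ?Y"
      by (rule v1st_mono[OF finNm Nminus_anti]) auto
    hence Rc_le: "fdm_Rc s rs N act h g j \<le> (?Y - ?X) / ?c" unfolding Rc using c
      by (simp add: divide_right_mono)
    have RM_le: "fdm_RM s rs N act h j i \<le> (?Y - ?X) / ?c" if "i \<in> ?MM" for i
    proof -
      have "?V (?Nm {i, ?C!j}) \<le> ?Y"
        by (rule v1st_mono[OF finNm Nminus_anti]) auto
      thus ?thesis unfolding fdm_RM_def Let_def using c by (simp add: divide_right_mono)
    qed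
    have "(\<Sum>i\<in>?MM. fdm_RM s rs N act h j i) \<le> (\<Sum>i\<in>?MM. (?Y - ?X) / ?c)"
      by (rule sum_mono) (rule RM_le)
    also have "\<dots> = real (card ?MM) * ((?Y - ?X) / ?c)" by simp
    finally have "fdm_Rc s rs N act h g j + (\<Sum>i\<in>?MM. fdm_RM s rs N act h j i)
       \<le> (?Y - ?X) / ?c + real (card ?MM) * ((?Y - ?X) / ?c)" using Rc_le by linarith
    also have "\<dots> = ?Y - ?X" using c by (rule frac_sum)
    finally show ?thesis using K by simp
  qed
  have Rc0: "fdm_Rc s rs N act h g 0 = 0" unfolding fdm_Rc_def Let_def by simp
  have SCP: "?SC \<subseteq> ?P" using setP wL by (auto intro!: nth_mem)
  have injC: "inj_on (\<lambda>j. ?C ! j) {..?w}" using dist wL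
    by (auto simp: inj_on_def nth_eq_iff_index_eq)
  have rev: "fdm_revenue s rs N act h g = (\<Sum>i\<in>?P - ?SC. ?pay i) + (\<Sum>i\<in>?SC. ?pay i)"
    unfolding fdm_revenue_def using sum.subset_diff[OF SCP finP] .
  have ifs: "(\<Sum>j\<le>?w. (if j < ?w then ?V (?Nm (?K j)) else 0)) = (\<Sum>j<?w. ?V (?Nm (?K j)))"
    by (simp add: lessThan_Suc_atMost[symmetric])
  have s1: "(\<Sum>i\<in>?SC. ?pay i) = (\<Sum>j\<le>?w. ?V (?Nm {?C!j}) - fdm_Rc s rs N act h g j)
      - (\<Sum>j<?w. ?V (?Nm (?K j)))"
  proof -
    have "(\<Sum>i\<in>?SC. ?pay i) = (\<Sum>j\<le>?w. ?pay (?C ! j))" using sum.reindex[OF injC] by simp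
    also have "\<dots> = (\<Sum>j\<le>?w. (?V (?Nm {?C!j}) - fdm_Rc s rs N act h g j)
        - (if j < ?w then ?V (?Nm (?K j)) else 0))"
      by (rule sum.cong) (simp_all add: payC)
    also have "\<dots> = (\<Sum>j\<le>?w. ?V (?Nm {?C!j}) - fdm_Rc s rs N act h g j)
      - (\<Sum>j<?w. ?V (?Nm (?K j)))" using ifs by (simp add: sum_subtractf)
    finally show ?thesis .
  qed
  have s2: "- (\<Sum>j\<in>{1..?w}. \<Sum>i\<in>?M (j-1). fdm_RM s rs N act h j i) \<le> (\<Sum>i\<in>?P - ?SC. ?pay i)"
  proof -
    have "(\<Sum>i\<in>?P - ?SC. - T i) \<le> (\<Sum>i\<in>?P - ?SC. ?pay i)"
      by (rule sum_mono) (use payO in auto)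
    moreover have "(\<Sum>i\<in>?P - ?SC. T i) \<le> (\<Sum>i\<in>?P. T i)"
      by (rule sum_mono2) (use finP Tnn in auto)
    moreover have "(\<Sum>i\<in>?P. T i) = (\<Sum>j\<in>{1..?w}. \<Sum>i\<in>?M (j-1). fdm_RM s rs N act h j i)"
    proof -
      have "(\<Sum>i\<in>?P. T i) = (\<Sum>j\<in>{1..?w}. \<Sum>i\<in>?P. if i \<in> ?M (j-1) then fdm_RM s rs N act h j i else 0)"
        unfolding T_def by (rule sum.swap)
      also have "\<dots> = (\<Sum>j\<in>{1..?w}. \<Sum>i\<in>?M (j-1). fdm_RM s rs N act h j i)"
      proof (rule sum.cong[OF refl])
        fix j
        have "?P \<inter> ?M (j-1) = ?M (j-1)" using MP by blast
        then show "(\<Sum>i\<in>?P. if i \<in> ?M (j-1) then fdm_RM s rs N act h j i else 0)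
          = (\<Sum>i\<in>?M (j-1). fdm_RM s rs N act h j i)"
          using sum.inter_restrict[OF finP, of "\<lambda>i. fdm_RM s rs N act h j i" "?M (j-1)"] by simp
      qed
      finally show ?thesis .
    qed
    ultimately show ?thesis by (simp add: sum_negf)
  qed
  have tel: "?V (?Nm {?C!0}) \<le> (\<Sum>j\<le>?w. ?V (?Nm {?C!j}) - fdm_Rc s rs N act h g j)
      - (\<Sum>j<?w. ?V (?Nm (?K j))) - (\<Sum>j\<in>{1..?w}. \<Sum>i\<in>?M (j-1). fdm_RM s rs N act h j i)"
    by (rule telescope[where A="\<lambda>j. ?V (?Nm {?C!j})" and R="\<lambda>j. fdm_Rc s rs N act h g j"
      and B="\<lambda>j. ?V (?Nm (?K j))" and G="\<lambda>j. \<Sum>i\<in>?M (j-1). fdm_RM s rs N act h j i", OF Rc0])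
      (use grp in auto)
  have hd: "hd ?C = ?C ! 0" using ne by (simp add: hd_conv_nth)
  have "?V (?Nm {hd ?C}) \<le> fdm_revenue s rs N act h g"
    unfolding hd using tel s1 s2 rev by linarith
  with part1 show ?thesis by blast
qed

end
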